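(* Consider $m$ shoes and a partition of the generic shoe sole into $J$ subsets $A_1,\dots,A_J$. For shoe $i$ and subset $j$, let $S_{ij}\ge 0$ be the area of the contact surface of shoe $i$ in $A_j$, and let $n_{ij}\in\{0,1,2,\dots\}$ be the observed number of randomly acquired characteristics (RACs) of shoe $i$ in $A_j$. Write $n_i=\sum_{j} n_{ij}$ and $n_{\cdot j}=\sum_{i=1}^m n_{ij}$. The model is: $a_1,\dots,a_m$ are i.i.d. positive random variables with $E(a_i)=1$ and density $h_\theta$ from a family indexed by $\theta$, and conditionally on $a_i$ the counts $N_{i1},\dots,N_{iJ}$ are independent with $N_{ij}\mid a_i\sim \mathrm{Poisson}(\lambda_j S_{ij} a_i)$, where $\lambda_1,\dots,\lambda_J>0$ are unknown. Consider the following three estimators of $(\lambda_1,\dots,\lambda_J)$: (i) the naive estimator $\hat\lambda_j=\frac{1}{|m_j|}\sum_{i\in m_j}\frac{n_{ij}}{S_{ij}}$, where $m_j=\{i: S_{ij}>0\}$; (ii) the random effects estimator: $(\hat\lambda_1,\dots,\hat\lambda_J)$ together with $\hat\theta$ maximize $$L(\lambda_1,\dots,\lambda_J,\theta)=\prod_{i=1}^m\int\prod_{j=1}^J\frac{e^{-\lambda_j a S_{ij}}(\lambda_j a S_{ij})^{n_{ij}}}{n_{ij}!}\,h_\theta(a)\,da;$$ (iii) the conditional maximum likelihood (CML) estimator: $(\hat\lambda_1,\dots,\hat\lambda_J)$ with positive entries solving, for every $k=1,\dots,J$, $$\sum_{i=1}^m\left[\frac{n_{ik}}{\hat\lambda_k}-\frac{n_i}{\sum_{j'}S_{ij'}\hat\lambda_{j'}}S_{ik}\right]=0$$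 (these are the score equations of the conditional log-likelihood $\sum_i\sum_j n_{ij}[\log\lambda_j+\log S_{ij}-\log(\sum_{j'}S_{ij'}\lambda_{j'})]$, obtained by conditioning on $N_i=n_i$; this determines $\lambda$ only up to a positive multiplicative constant). If $S_{ij}=S_j$ for all $i,j$ (all shoes have the same contact surface areas in each subset), with $S_j>0$ for all $j$, then for each of the three estimators, $$\frac{\hat\lambda_j}{\hat\lambda_k}=\frac{n_{\cdot j}}{n_{\cdot k}}\cdot\frac{S_k}{S_j}$$ for any $j,k$ with $n_{\cdot k}>0$.
   Context: RACs are randomly acquired characteristics (e.g. scratches, holes) on shoe soles; $a_i$ models the degree of wear and tear of shoe $i$. The CML estimator is defined only up to a common positive scale, but the ratios $\hat\lambda_j/\hat\lambda_k$ are well defined. *)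

theory Defs
  imports "HOL-Analysis.Analysis"
begin

text \<open>Shoes are indexed by i < m, subsets of the sole by j < J.
  S i j = contact surface area of shoe i in A_j, n i j = observed RAC count.\<close>

definition row_total :: "nat \<Rightarrow> (nat \<Rightarrow> nat \<Rightarrow> nat) \<Rightarrow> nat \<Rightarrow> nat" where
  "row_total J n i = (\<Sum>j<J. n i j)"

definition col_total :: "nat \<Rightarrow> (nat \<Rightarrow> nat \<Rightarrow> nat) \<Rightarrow> nat \<Rightarrow> nat" where
  "col_total m n j = (\<Sum>i<m. n i j)"

definition naive_est :: "nat \<Rightarrow> (nat \<Rightarrow> nat \<Rightarrow> real) \<Rightarrow> (nat \<Rightarrow> nat \<Rightarrow> nat) \<Rightarrow> nat \<Rightarrow> real" where
  "naive_est m S n j =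
     (let mj = {i. i < m \<and> S i j > 0}
      in (1 / real (card mj)) * (\<Sum>i\<in>mj. real (n i j) / S i j))"

definition mean_one_pos_density :: "(real \<Rightarrow> real) \<Rightarrow> bool" where
  "mean_one_pos_density f \<longleftrightarrow>
     f \<in> borel_measurable borel \<and> (\<forall>a. 0 \<le> f a) \<and> (\<forall>a\<le>0. f a = 0) \<and>
     integrable lborel f \<and> integral\<^sup>L lborel f = 1 \<and>
     integrable lborel (\<lambda>a. a * f a) \<and> integral\<^sup>L lborel (\<lambda>a. a * f a) = 1"

definition RE_lik :: "nat \<Rightarrow> nat \<Rightarrow> (nat \<Rightarrow> nat \<Rightarrow> real) \<Rightarrow> (nat \<Rightarrow> nat \<Rightarrow> nat)
    \<Rightarrow> ('t \<Rightarrow> real \<Rightarrow> real) \<Rightarrow> (nat \<Rightarrow> real) \<Rightarrow> 't \<Rightarrow> real" where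
  "RE_lik m J S n h lam \<theta> =
     (\<Prod>i<m. \<integral>a. (\<Prod>j<J. exp (- (lam j * a * S i j)) * (lam j * a * S i j) ^ (n i j)
                          / fact (n i j)) * h \<theta> a \<partial>lborel)"

definition is_RE_est :: "nat \<Rightarrow> nat \<Rightarrow> (nat \<Rightarrow> nat \<Rightarrow> real) \<Rightarrow> (nat \<Rightarrow> nat \<Rightarrow> nat)
    \<Rightarrow> ('t \<Rightarrow> real \<Rightarrow> real) \<Rightarrow> 't set \<Rightarrow> (nat \<Rightarrow> real) \<Rightarrow> 't \<Rightarrow> bool" where
  "is_RE_est m J S n h \<Theta> lam \<theta> \<longleftrightarrow>
     (\<forall>j<J. lam j > 0) \<and> \<theta> \<in> \<Theta> \<and>
     (\<forall>lam' \<theta>'. (\<forall>j<J. lam' j > 0) \<and> \<theta>' \<in> \<Theta> \<longrightarrow>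
        RE_lik m J S n h lam' \<theta>' \<le> RE_lik m J S n h lam \<theta>)"

definition is_CML_est :: "nat \<Rightarrow> nat \<Rightarrow> (nat \<Rightarrow> nat \<Rightarrow> real) \<Rightarrow> (nat \<Rightarrow> nat \<Rightarrow> nat)
    \<Rightarrow> (nat \<Rightarrow> real) \<Rightarrow> bool" where
  "is_CML_est m J S n lam \<longleftrightarrow>
     (\<forall>j<J. lam j > 0) \<and>
     (\<forall>k<J. (\<Sum>i<m. real (n i k) / lam k
               - real (row_total J n i) / (\<Sum>j'<J. S i j' * lam j') * S i k) = 0)"

end

theory Submission
  imports Defs
begin

definition phi :: "real \<Rightarrow> nat \<Rightarrow> real" where
  "phi y q = exp (- y) * y ^ q / fact q"

lemma pow_le_exp: "0 \<le> (y::real) \<Longrightarrow> y ^ q / fact q \<le> exp y"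
proof -
  assume y: "0 \<le> y"
  have s: "summable (\<lambda>i. y ^ i /\<^sub>R fact i)" by (rule summable_exp_generic)
  have "y ^ q /\<^sub>R fact q \<le> (\<Sum>i. y ^ i /\<^sub>R fact i)"
    using sum_le_suminf[OF s, of "{q}"] y by auto
  then show ?thesis by (simp add: exp_def divide_inverse mult.commute)
qed

lemma phi_le1: "0 \<le> y \<Longrightarrow> phi y q \<le> 1"
  using pow_le_exp[of y q] by (simp add: phi_def exp_minus field_simps)

lemma phi_pos: "0 < y \<Longrightarrow> phi y q > 0"
  by (simp add: phi_def)

lemma ln_strict: "0 < (y::real) \<Longrightarrow> y \<noteq> 1 \<Longrightarrow> ln y < y - 1"
  using ln_le_minus_one ln_eq_minus_one by fastforce

lemma amgm0:
  fixes xj xk a b :: real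
  assumes "xj > 0" "xk > 0" "b > 0" "a \<ge> 0" "xj * b \<noteq> xk * a"
  shows "\<exists>u v. u > 0 \<and> v > 0 \<and> u + v = xj + xk \<and> (u/xj) powr a * (v/xk) powr b > 1"
proof (cases "a = 0")
  case True
  define u where "u = xj/2"
  define v where "v = xk + xj/2"
  have "v / xk > 1" using assms by (simp add: v_def field_simps)
  then have "(v/xk) powr b > 1" using assms by (intro gr_one_powr) auto
  then show ?thesis using assms True by (intro exI[of _ u] exI[of _ v]) (auto simp: u_def v_def)
next
  case False
  then have a: "a > 0" using assms by auto
  define u where "u = (xj+xk)*a/(a+b)"
  define v where "v = (xj+xk)*b/(a+b)"
  have u: "u > 0" and v: "v > 0" using assms a by (auto simp: u_def v_def)
  have ab: "a + b > 0" using a assms by simp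
  have uv: "u + v = xj + xk" unfolding u_def v_def using ab
    by (simp add: add_divide_distrib[symmetric] distrib_left[symmetric])
  have ne: "xj / u \<noteq> 1"
  proof
    assume "xj / u = 1"
    then have "xj = u" using u by simp
    then have "xj * (a+b) = (xj+xk)*a" using assms a by (simp add: u_def field_simps)
    then show False using assms by (simp add: algebra_simps)
  qed
  have l1: "ln (xj/u) < xj/u - 1" using ln_strict[OF _ ne] u assms by simp
  have l2: "ln (xk/v) \<le> xk/v - 1" using ln_le_minus_one v assms by simp
  have p1: "a*xj + a*xk > 0" "b*xj+b*xk > 0" "xj + xk > 0" using assms a by (auto intro: add_pos_pos)
  have e1: "a*(xj/u) = xj*(a+b)/(xj+xk)" using assms a ab p1 by (simp add: u_def field_simps)
  have e2: "b*(xk/v) = xk*(a+b)/(xj+xk)" using assms a ab p1 by (simp add: v_def field_simps)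
  have e3: "xj*(a+b)/(xj+xk) + xk*(a+b)/(xj+xk) = a + b" using assms
    by (simp add: add_divide_distrib[symmetric] distrib_right[symmetric])
  have sum0: "a * (xj/u - 1) + b * (xk/v - 1) = 0"
    using e1 e2 e3 by (simp add: right_diff_distrib)
  have "a * ln (xj/u) + b * ln (xk/v) < 0"
  proof -
    have "a * ln (xj/u) < a * (xj/u - 1)" using l1 a by simp
    moreover have "b * ln (xk/v) \<le> b * (xk/v - 1)" using l2 assms by (simp add: mult_left_mono)
    ultimately show ?thesis using sum0 by linarith
  qed
  moreover have "ln ((u/xj) powr a * (v/xk) powr b) = - (a * ln (xj/u) + b * ln (xk/v))"
    using u v assms by (simp add: ln_mult ln_powr ln_div algebra_simps)
  ultimately have "ln ((u/xj) powr a * (v/xk) powr b) > 0" by simp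
  then have "(u/xj) powr a * (v/xk) powr b > 1"
    using u v assms by (subst (asm) ln_gt_zero_iff) auto
  then show ?thesis using u v uv by blast
qed

lemma amgm:
  fixes xj xk :: real and a b :: nat
  assumes "xj > 0" "xk > 0" "b > 0" "xj * b \<noteq> xk * a"
  shows "\<exists>u v. u > 0 \<and> v > 0 \<and> u + v = xj + xk \<and> (u/xj) ^ a * (v/xk) ^ b > 1"
proof -
  obtain u v where uv: "u > 0" "v > 0" "u + v = xj + xk" "(u/xj) powr a * (v/xk) powr b > 1"
    using amgm0[of xj xk "real b" "real a"] assms by auto
  then show ?thesis using assms by (intro exI[of _ u] exI[of _ v]) (simp add: powr_realpow)
qed

lemma int_pos:
  fixes f g :: "real \<Rightarrow> real"
  assumes g: "mean_one_pos_density g" and fpos: "\<And>a. a > 0 \<Longrightarrow> f a > 0"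
    and fle: "\<And>a. a \<ge> 0 \<Longrightarrow> f a \<le> 1" and fm: "f \<in> borel_measurable borel"
  shows "(\<integral>a. f a * g a \<partial>lborel) > 0"
proof -
  have gm: "g \<in> borel_measurable borel" and gnn: "\<And>a. 0 \<le> g a" and g0: "\<And>a. a \<le> 0 \<Longrightarrow> g a = 0"
    and gi: "integrable lborel g" and g1: "integral\<^sup>L lborel g = 1"
    using g by (auto simp: mean_one_pos_density_def)
  have fgm: "(\<lambda>a. f a * g a) \<in> borel_measurable lborel" using fm gm by simp
  have nn: "0 \<le> f a * g a" for a
  proof (cases "a > 0")
    case True then show ?thesis using fpos[of a] gnn[of a] by simp
  next
    case False then show ?thesis using g0[of a] by simp
  qed
  have bd: "norm (f a * g a) \<le> norm (g a)" for a
  proof (cases "a > 0")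
    case True then show ?thesis using fpos[of a] fle[of a] gnn[of a]
      by (simp add: abs_mult mult_left_le_one_le)
  next
    case False then show ?thesis using g0[of a] by simp
  qed
  have fgi: "integrable lborel (\<lambda>a. f a * g a)"
    by (rule Bochner_Integration.integrable_bound[OF gi fgm]) (use bd in auto)
  have "integral\<^sup>L lborel (\<lambda>a. f a * g a) \<noteq> 0"
  proof
    assume "integral\<^sup>L lborel (\<lambda>a. f a * g a) = 0"
    then have "AE a in lborel. f a * g a = 0"
      using integral_nonneg_eq_0_iff_AE[OF fgi] nn by auto
    then have "AE a in lborel. g a = 0"
    proof (rule AE_mp, intro AE_I2 impI)
      fix a assume "f a * g a = 0"
      then show "g a = 0" using fpos[of a] g0[of a] by (cases "a > 0") auto
    qed
    then have "integral\<^sup>L lborel g = integral\<^sup>L lborel (\<lambda>a. 0::real)"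
      using integral_cong_AE[OF _ _ \<open>AE a in lborel. g a = 0\<close>] gm by simp
    then show False using g1 by simp
  qed
  moreover have "integral\<^sup>L lborel (\<lambda>a. f a * g a) \<ge> 0"
    using nn by (simp add: integral_nonneg)
  ultimately show ?thesis by linarith
qed

lemma scale:
  fixes x :: "nat \<Rightarrow> real" and q :: "nat \<Rightarrow> nat"
  assumes "j < J" "k < J" "j \<noteq> k" "x j > 0" "x k > 0" "u + v = x j + x k"
  shows "(\<Prod>l<J. phi ((x(j:=u,k:=v)) l * a) (q l))
       = (u/x j)^(q j) * (v/x k)^(q k) * (\<Prod>l<J. phi (x l * a) (q l))"
proof -
  have gen: "(\<Prod>l<J. G l) = G j * G k * (\<Prod>l\<in>{..<J}-{j}-{k}. G l)" for G :: "nat \<Rightarrow> real"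
  proof -
    have "(\<Prod>l<J. G l) = G j * (\<Prod>l\<in>{..<J}-{j}. G l)"
      using assms by (subst prod.remove[of _ j]) auto
    also have "(\<Prod>l\<in>{..<J}-{j}. G l) = G k * (\<Prod>l\<in>{..<J}-{j}-{k}. G l)"
      using assms by (subst prod.remove[of _ k]) auto
    finally show ?thesis by simp
  qed
  have rest: "(\<Prod>l\<in>{..<J}-{j}-{k}. phi ((x(j:=u,k:=v)) l * a) (q l))
            = (\<Prod>l\<in>{..<J}-{j}-{k}. phi (x l * a) (q l))"
    by (rule prod.cong) auto
  have eqexp: "exp (- (u * a)) * exp (- (v * a)) = exp (- (x j * a)) * exp (- (x k * a))"
  proof -
    have "exp (- (u * a)) * exp (- (v * a)) = exp (- ((u+v)*a))" by (simp add: exp_add[symmetric] algebra_simps)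
    also have "\<dots> = exp (- (x j * a)) * exp (- (x k * a))" using assms by (simp add: exp_add[symmetric] algebra_simps)
    finally show ?thesis .
  qed
  have pu: "(u * a)^r = (u/x j)^r * (x j * a)^r" for r
    using assms by (simp add: power_mult_distrib[symmetric])
  have pv: "(v * a)^r = (v/x k)^r * (x k * a)^r" for r
    using assms by (simp add: power_mult_distrib[symmetric])
  have jk: "phi (u * a) (q j) * phi (v * a) (q k)
     = (u/x j)^(q j) * (v/x k)^(q k) * (phi (x j * a) (q j) * phi (x k * a) (q k))"
    unfolding phi_def pu pv
  proof -
    have "exp (- (u * a)) * ((u / x j) ^ q j * (x j * a) ^ q j) / fact (q j) *
      (exp (- (v * a)) * ((v / x k) ^ q k * (x k * a) ^ q k) / fact (q k))
      = (exp (- (u * a)) * exp (- (v * a))) * ((u / x j) ^ q j * (v / x k) ^ q k) *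
         ((x j * a) ^ q j / fact (q j) * ((x k * a) ^ q k / fact (q k)))" by simp
    also have "\<dots> = (exp (- (x j * a)) * exp (- (x k * a))) * ((u / x j) ^ q j * (v / x k) ^ q k) *
         ((x j * a) ^ q j / fact (q j) * ((x k * a) ^ q k / fact (q k)))" by (simp only: eqexp)
    finally show "exp (- (u * a)) * ((u / x j) ^ q j * (x j * a) ^ q j) / fact (q j) *
      (exp (- (v * a)) * ((v / x k) ^ q k * (x k * a) ^ q k) / fact (q k)) =
      (u / x j) ^ q j * (v / x k) ^ q k *
      (exp (- (x j * a)) * (x j * a) ^ q j / fact (q j) * (exp (- (x k * a)) * (x k * a) ^ q k / fact (q k)))"
      by simp
  qed
  show ?thesis
    apply (simp only: gen)
    using assms jk rest by simp
qed

lemma phi_nn: "0 \<le> y \<Longrightarrow> 0 \<le> phi y q"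
  by (simp add: phi_def)

lemma RE_rw:
  assumes same: "\<forall>i<m. \<forall>j<J. S i j = Sj j"
  shows "RE_lik m J S n h lam \<theta> =
    (\<Prod>i<m. \<integral>a. (\<Prod>l<J. phi (lam l * Sj l * a) (n i l)) * h \<theta> a \<partial>lborel)"
  unfolding RE_lik_def phi_def
proof (rule prod.cong[OF refl])
  fix i assume i: "i \<in> {..<m}"
  show "(\<integral>a. (\<Prod>j<J. exp (- (lam j * a * S i j)) * (lam j * a * S i j) ^ n i j / fact (n i j)) * h \<theta> a \<partial>lborel) =
    (\<integral>a. (\<Prod>l<J. exp (- (lam l * Sj l * a)) * (lam l * Sj l * a) ^ n i l / fact (n i l)) * h \<theta> a \<partial>lborel)"
    by (rule Bochner_Integration.integral_cong[OF refl], rule arg_cong2[where f="(*)"], rule prod.cong[OF refl])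
       (use i same in \<open>auto simp: mult_ac\<close>)
qed

lemma f_meas: "(\<lambda>a. \<Prod>l<J. phi (x l * a) (q l)) \<in> borel_measurable borel"
  unfolding phi_def by measurable

lemma RE_part:
  assumes dens: "\<forall>\<theta>\<in>\<Theta>. mean_one_pos_density (h \<theta>)"
    and same: "\<forall>i<m. \<forall>j<J. S i j = Sj j"
    and Spos: "\<forall>j<J. Sj j > 0"
    and jk: "j < J" "k < J" "col_total m n k > 0"
    and est: "is_RE_est m J S n h \<Theta> lam \<theta>"
  shows "lam j / lam k = (real (col_total m n j) / real (col_total m n k)) * (Sj k / Sj j)"
proof -
  have lpos: "\<forall>l<J. lam l > 0" and th: "\<theta> \<in> \<Theta>"
    and maxi: "\<And>lam' \<theta>'. (\<forall>j<J. lam' j > 0) \<Longrightarrow> \<theta>' \<in> \<Theta> \<Longrightarrow>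
        RE_lik m J S n h lam' \<theta>' \<le> RE_lik m J S n h lam \<theta>"
    using est unfolding is_RE_est_def by auto
  have hd: "mean_one_pos_density (h \<theta>)" using dens th by auto
  define A where "A = col_total m n j"
  define B where "B = col_total m n k"
  have Bpos: "B > 0" using jk by (simp add: B_def)
  show ?thesis
  proof (cases "j = k")
    case True
    have "lam k > 0" "Sj k > 0" using lpos Spos jk by auto
    then show ?thesis using True Bpos by (simp add: B_def)
  next
    case jnk: False
    define x where "x l = lam l * Sj l" for l
    have xpos: "\<And>l. l < J \<Longrightarrow> x l > 0" using lpos Spos by (simp add: x_def)
    define I where "I i = (\<integral>a. (\<Prod>l<J. phi (x l * a) (n i l)) * h \<theta> a \<partial>lborel)" for i
    have RE0: "RE_lik m J S n h lam \<theta> = (\<Prod>i<m. I i)"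
      unfolding RE_rw[OF same] I_def x_def ..
    have Ipos: "I i > 0" for i
      unfolding I_def
    proof (rule int_pos[OF hd])
      fix a :: real assume "a > 0"
      then show "(\<Prod>l<J. phi (x l * a) (n i l)) > 0"
        using xpos by (intro prod_pos) (auto intro: phi_pos)
    next
      fix a :: real assume "a \<ge> 0"
      then show "(\<Prod>l<J. phi (x l * a) (n i l)) \<le> 1"
      proof (intro prod_le_1 conjI)
        fix l assume "l \<in> {..<J}"
        then have "0 \<le> x l * a" using xpos[of l] \<open>a \<ge> 0\<close> by simp
        then show "0 \<le> phi (x l * a) (n i l)" "phi (x l * a) (n i l) \<le> 1"
          by (auto intro: phi_nn phi_le1)
      qed
    qed (rule f_meas)
    have REpos: "RE_lik m J S n h lam \<theta> > 0" unfolding RE0 using Ipos by (intro prod_pos) auto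
    have "x j * B = x k * A"
    proof (rule ccontr)
      assume ne: "x j * B \<noteq> x k * A"
      obtain u v where uv: "u > 0" "v > 0" "u + v = x j + x k" "(u/x j) ^ A * (v/x k) ^ B > 1"
        using amgm[of "x j" "x k" B A] ne Bpos xpos jk by auto
      define lam' where "lam' = lam(j := u / Sj j, k := v / Sj k)"
      have l'pos: "\<forall>l<J. lam' l > 0" using lpos Spos uv jk by (simp add: lam'_def)
      have x': "(\<lambda>l. lam' l * Sj l) = x(j:=u, k:=v)"
        using Spos jk jnk by (auto simp: lam'_def x_def fun_eq_iff)
      have "RE_lik m J S n h lam' \<theta> =
          (\<Prod>i<m. \<integral>a. (\<Prod>l<J. phi ((x(j:=u, k:=v)) l * a) (n i l)) * h \<theta> a \<partial>lborel)"
        unfolding RE_rw[OF same] x'[symmetric] ..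
      also have "\<dots> = (\<Prod>i<m. ((u/x j)^(n i j) * (v/x k)^(n i k)) * I i)"
        unfolding I_def scale[OF jk(1,2) jnk xpos[OF jk(1)] xpos[OF jk(2)] uv(3)]
        by (simp add: mult.assoc)
      also have "\<dots> = (\<Prod>i<m. (u/x j)^(n i j)) * (\<Prod>i<m. (v/x k)^(n i k)) * (\<Prod>i<m. I i)"
        by (simp add: prod.distrib)
      also have "\<dots> = ((u/x j) ^ A * (v/x k) ^ B) * RE_lik m J S n h lam \<theta>"
        unfolding RE0 A_def B_def col_total_def by (simp add: power_sum)
      finally have eq: "RE_lik m J S n h lam' \<theta> = ((u/x j) ^ A * (v/x k) ^ B) * RE_lik m J S n h lam \<theta>" .
      have "RE_lik m J S n h lam' \<theta> \<le> RE_lik m J S n h lam \<theta>" using maxi[OF l'pos th] .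
      moreover have "RE_lik m J S n h lam \<theta> < ((u/x j) ^ A * (v/x k) ^ B) * RE_lik m J S n h lam \<theta>"
        using uv(4) REpos by simp
      ultimately show False using eq by simp
    qed
    then have "lam j * Sj j * B = lam k * Sj k * A" by (simp add: x_def)
    moreover have "lam j > 0" "lam k > 0" "Sj j > 0" "Sj k > 0" using lpos Spos jk by auto
    ultimately show ?thesis using Bpos unfolding A_def[symmetric] B_def[symmetric]
      by (simp add: field_simps)
  qed
qed

lemma naive_part:
  assumes same: "\<forall>i<m. \<forall>j<J. S i j = Sj j"
    and Spos: "\<forall>j<J. Sj j > 0"
    and jk: "j < J" "k < J" "col_total m n k > 0"
  shows "naive_est m S n j / naive_est m S n k
           = (real (col_total m n j) / real (col_total m n k)) * (Sj k / Sj j)"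
proof -
  have m: "m > 0" using jk(3) by (cases m) (auto simp: col_total_def)
  have ne: "naive_est m S n l = real (col_total m n l) / (real m * Sj l)" if l: "l < J" for l
  proof -
    have set: "{i. i < m \<and> S i l > 0} = {..<m}" using same Spos l by auto
    have "(\<Sum>i<m. real (n i l) / S i l) = (\<Sum>i<m. real (n i l) / Sj l)"
      using same l by (intro sum.cong) auto
    also have "\<dots> = real (col_total m n l) / Sj l"
      by (simp add: col_total_def sum_divide_distrib)
    finally show ?thesis unfolding naive_est_def Let_def set by simp
  qed
  have "Sj j > 0" "Sj k > 0" using Spos jk by auto
  then show ?thesis unfolding ne[OF jk(1)] ne[OF jk(2)] using m jk(3) by (simp add: field_simps)
qed

lemma CML_part:
  assumes same: "\<forall>i<m. \<forall>j<J. S i j = Sj j"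
    and Spos: "\<forall>j<J. Sj j > 0"
    and jk: "j < J" "k < J" "col_total m n k > 0"
    and est: "is_CML_est m J S n lam"
  shows "lam j / lam k = (real (col_total m n j) / real (col_total m n k)) * (Sj k / Sj j)"
proof -
  have lpos: "\<forall>l<J. lam l > 0" and sc: "\<And>l. l < J \<Longrightarrow> (\<Sum>i<m. real (n i l) / lam l
               - real (row_total J n i) / (\<Sum>j'<J. S i j' * lam j') * S i l) = 0"
    using est unfolding is_CML_est_def by auto
  define D where "D = (\<Sum>j'<J. Sj j' * lam j')"
  define T where "T = (\<Sum>i<m. real (row_total J n i))"
  have Dpos: "D > 0" unfolding D_def using jk lpos Spos
    by (intro sum_pos) auto
  have key: "real (col_total m n l) / lam l = T / D * Sj l" if l: "l < J" for l
  proof -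
    have "(\<Sum>i<m. real (n i l) / lam l - real (row_total J n i) / (\<Sum>j'<J. S i j' * lam j') * S i l)
        = (\<Sum>i<m. real (n i l) / lam l - real (row_total J n i) / D * Sj l)"
    proof (intro sum.cong refl)
      fix i assume i: "i \<in> {..<m}"
      have "(\<Sum>j'<J. S i j' * lam j') = D" unfolding D_def using same i by (intro sum.cong) auto
      then show "real (n i l) / lam l - real (row_total J n i) / (\<Sum>j'<J. S i j' * lam j') * S i l
          = real (n i l) / lam l - real (row_total J n i) / D * Sj l" using same i l by simp
    qed
    also have "\<dots> = real (col_total m n l) / lam l - T / D * Sj l"
      by (simp add: sum_subtractf col_total_def T_def sum_divide_distrib sum_distrib_right)
    finally show ?thesis using sc[OF l] by simp
  qed
  have pos: "lam j > 0" "lam k > 0" "Sj j > 0" "Sj k > 0" using lpos Spos jk by auto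
  have kj: "real (col_total m n j) = T / D * Sj j * lam j" "real (col_total m n k) = T / D * Sj k * lam k"
    using key[OF jk(1)] key[OF jk(2)] pos by (simp_all add: field_simps)
  have "T \<noteq> 0" using kj(2) jk(3) by auto
  then show ?thesis unfolding kj using pos Dpos by (simp add: field_simps)
qed

theorem proposition1:
  fixes m J :: nat
    and S :: "nat \<Rightarrow> nat \<Rightarrow> real" and Sj :: "nat \<Rightarrow> real"
    and n :: "nat \<Rightarrow> nat \<Rightarrow> nat"
    and h :: "'t \<Rightarrow> real \<Rightarrow> real" and \<Theta> :: "'t set"
  assumes dens: "\<forall>\<theta>\<in>\<Theta>. mean_one_pos_density (h \<theta>)"
    and same: "\<forall>i<m. \<forall>j<J. S i j = Sj j"
    and Spos: "\<forall>j<J. Sj j > 0"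
    and jk: "j < J" "k < J" "col_total m n k > 0"
  shows "naive_est m S n j / naive_est m S n k
           = (real (col_total m n j) / real (col_total m n k)) * (Sj k / Sj j)
       \<and> (\<forall>lam \<theta>. is_RE_est m J S n h \<Theta> lam \<theta> \<longrightarrow>
            lam j / lam k = (real (col_total m n j) / real (col_total m n k)) * (Sj k / Sj j))
       \<and> (\<forall>lam. is_CML_est m J S n lam \<longrightarrow>
            lam j / lam k = (real (col_total m n j) / real (col_total m n k)) * (Sj k / Sj j))"
  using naive_part[OF same Spos jk] RE_part[OF dens same Spos jk] CML_part[OF same Spos jk]
  by blast

end
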